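(* Let $X\in\sigma\mathcal F$ and $F\in\mathsf{age}(X)$ with $\mathsf{rk}_X(F)=\alpha$ for some ordinal $\alpha<\infty$. If $\beta<\alpha$, then there is $E\in\mathsf{age}(X)$ with $\mathsf{rk}_X(E)=\beta$.
   Context: Let $\mathcal L$ be a countable relational language without constants and $\mathcal F$ a hereditary, isomorphism-closed class of finite $\mathcal L$-structures. $\sigma\mathcal F$ is the class of countable structures isomorphic to unions of chains in $\mathcal F$; $\mathsf{age}(X)$ is the set of finite (induced) substructures of $X$. For $A\le B$, $B$ is a prime extension of $A$ if $|B\setminus A|=1$; a realization of $B$ in $X$ (where $A\le X$) is $C\le X$ with $A\le C$ and an isomorphism $B\to C$ fixing $A$ pointwise. For $F\in\mathsf{age}(X)$ define by recursion: $\mathsf{rk}_X(F)\ge0$ always; $\mathsf{rk}_X(F)\ge\alpha+1$ iff every prime extension $B\in\mathcal F$ of $F$ has a realization $C$ in $X$ with $\mathsf{rk}_X(C)\ge\alpha$; for limit $\alpha$, $\mathsf{rk}_X(F)\ge\alpha$ iff $\mathsf{rk}_X(F)\ge\beta$ for all $\beta<\alpha$. $\mathsf{rk}_X(F)=\sup\{\alpha:\mathsf{rk}_X(F)\ge\alpha\}$, with value $\infty$ (larger than every ordinal) if $\mathsf{rk}_X(F)\ge\alpha$ for every ordinal $\alpha$. *)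

theory Defs
  imports Main "HOL-Library.Countable"
begin

text \<open>A relational language: relation symbols of a countable type 'r with arities
  given by ar.  There are no constant or function symbols.  All structures have
  universes contained in nat (X is countable; finite structures are taken up to
  isomorphism, and nat has room for every finite structure and its prime extensions).\<close>

record 'r struc =
  univ :: "nat set"
  rels :: "'r \<Rightarrow> nat list \<Rightarrow> bool"

definition wf_struc :: "('r \<Rightarrow> nat) \<Rightarrow> 'r struc \<Rightarrow> bool" where
  "wf_struc ar A \<longleftrightarrow> (\<forall>r xs. rels A r xs \<longrightarrow> length xs = ar r \<and> set xs \<subseteq> univ A)"

definition substr :: "('r \<Rightarrow> nat) \<Rightarrow> 'r struc \<Rightarrow> 'r struc \<Rightarrow> bool" where
  "substr ar A B \<longleftrightarrow> wf_struc ar A \<and> wf_struc ar B \<and> univ A \<subseteq> univ B \<and>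
     (\<forall>r xs. set xs \<subseteq> univ A \<longrightarrow> (rels A r xs \<longleftrightarrow> rels B r xs))"

definition iso :: "('r \<Rightarrow> nat) \<Rightarrow> 'r struc \<Rightarrow> 'r struc \<Rightarrow> (nat \<Rightarrow> nat) \<Rightarrow> bool" where
  "iso ar A B f \<longleftrightarrow> wf_struc ar A \<and> wf_struc ar B \<and> bij_betw f (univ A) (univ B) \<and>
     (\<forall>r xs. set xs \<subseteq> univ A \<longrightarrow> (rels A r xs \<longleftrightarrow> rels B r (map f xs)))"

definition isomorphic :: "('r \<Rightarrow> nat) \<Rightarrow> 'r struc \<Rightarrow> 'r struc \<Rightarrow> bool" where
  "isomorphic ar A B \<longleftrightarrow> (\<exists>f. iso ar A B f)"

definition good_class :: "('r \<Rightarrow> nat) \<Rightarrow> 'r struc set \<Rightarrow> bool" where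
  "good_class ar \<F> \<longleftrightarrow>
     (\<forall>A\<in>\<F>. wf_struc ar A \<and> finite (univ A)) \<and>
     (\<forall>A\<in>\<F>. \<forall>B. substr ar B A \<longrightarrow> B \<in> \<F>) \<and>
     (\<forall>A\<in>\<F>. \<forall>B. isomorphic ar A B \<longrightarrow> B \<in> \<F>)"

definition chain_union :: "'r struc set \<Rightarrow> 'r struc" where
  "chain_union C = \<lparr>univ = (\<Union>A\<in>C. univ A), rels = (\<lambda>r xs. \<exists>A\<in>C. rels A r xs)\<rparr>"

definition is_chain :: "('r \<Rightarrow> nat) \<Rightarrow> 'r struc set \<Rightarrow> bool" where
  "is_chain ar C \<longleftrightarrow> (\<forall>A\<in>C. \<forall>B\<in>C. substr ar A B \<or> substr ar B A)"

text \<open>\<sigma>\<F>: countable structures isomorphic to unions of chains in \<F>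
  (countability is automatic since universes are subsets of nat).\<close>
definition sigma_class :: "('r \<Rightarrow> nat) \<Rightarrow> 'r struc set \<Rightarrow> 'r struc set" where
  "sigma_class ar \<F> = {X. \<exists>C. C \<subseteq> \<F> \<and> is_chain ar C \<and> isomorphic ar (chain_union C) X}"

definition age :: "('r \<Rightarrow> nat) \<Rightarrow> 'r struc \<Rightarrow> 'r struc set" where
  "age ar X = {F. substr ar F X \<and> finite (univ F)}"

definition prime_ext :: "('r \<Rightarrow> nat) \<Rightarrow> 'r struc \<Rightarrow> 'r struc \<Rightarrow> bool" where
  "prime_ext ar A B \<longleftrightarrow> substr ar A B \<and> card (univ B - univ A) = 1"

definition realization :: "('r \<Rightarrow> nat) \<Rightarrow> 'r struc \<Rightarrow> 'r struc \<Rightarrow> 'r struc \<Rightarrow> 'r struc \<Rightarrow> bool" where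
  "realization ar X A B C \<longleftrightarrow> substr ar C X \<and> substr ar A C \<and>
     (\<exists>f. iso ar B C f \<and> (\<forall>x\<in>univ A. f x = x))"

text \<open>Ordinals are modelled by the elements of an arbitrary well-ordered type 'o.
  gamma is the immediate successor of alpha:\<close>
definition is_succ :: "'o::wellorder \<Rightarrow> 'o \<Rightarrow> bool" where
  "is_succ \<alpha> \<gamma> \<longleftrightarrow> \<alpha> < \<gamma> \<and> (\<forall>\<delta>. \<alpha> < \<delta> \<longrightarrow> \<gamma> \<le> \<delta>)"

text \<open>rk_ge ar \<F> X \<alpha> F means rk_X(F) \<ge> \<alpha>, by recursion on \<alpha>:
  \<alpha> = 0 and limit \<alpha>: rk \<ge> \<beta> for all \<beta> < \<alpha>;
  \<alpha> = \<gamma>+1: every prime extension B \<in> \<F> of F has a realization C in X with rk \<ge> \<gamma>.\<close>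
function rk_ge :: "('r \<Rightarrow> nat) \<Rightarrow> 'r struc set \<Rightarrow> 'r struc \<Rightarrow> 'o::wellorder \<Rightarrow> 'r struc \<Rightarrow> bool" where
  "rk_ge ar \<F> X \<alpha> F \<longleftrightarrow> F \<in> age ar X \<and>
     (\<forall>\<gamma>\<in>{..<\<alpha>}. is_succ \<gamma> \<alpha> \<longrightarrow>
        (\<forall>B\<in>\<F>. prime_ext ar F B \<longrightarrow> (\<exists>C. realization ar X F B C \<and> rk_ge ar \<F> X \<gamma> C))) \<and>
     ((\<nexists>\<gamma>. is_succ \<gamma> \<alpha>) \<longrightarrow> (\<forall>\<beta>\<in>{..<\<alpha>}. rk_ge ar \<F> X \<beta> F))"
  by auto
termination
  by (relation "inv_image {(x, y). x < y} (\<lambda>(_, _, _, \<alpha>, _). \<alpha>)") (auto intro: wf)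

definition rk_eq :: "('r \<Rightarrow> nat) \<Rightarrow> 'r struc set \<Rightarrow> 'r struc \<Rightarrow> 'o::wellorder \<Rightarrow> 'r struc \<Rightarrow> bool" where
  "rk_eq ar \<F> X \<alpha> F \<longleftrightarrow> rk_ge ar \<F> X \<alpha> F \<and> (\<exists>\<gamma>. is_succ \<alpha> \<gamma> \<and> \<not> rk_ge ar \<F> X \<gamma> F)"

end

theory Submission
  imports Defs
begin

declare rk_ge.simps[simp del]

lemma succ_unique:
  fixes a b c :: "'o::wellorder"
  assumes "is_succ a c" "is_succ b c" shows "a = b"
  using assms unfolding is_succ_def
  by (metis linorder_neqE not_le)

lemma succ_exists:
  fixes a b :: "'o::wellorder"
  assumes "a < b" shows "\<exists>s. is_succ a s"
proof -
  let ?s = "LEAST x. a < x"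
  have "a < ?s" using assms by (rule LeastI)
  moreover have "\<forall>d. a < d \<longrightarrow> ?s \<le> d" by (auto intro: Least_le)
  ultimately show ?thesis unfolding is_succ_def by blast
qed

lemma rk_age:
  assumes "rk_ge ar K X \<alpha> F" shows "F \<in> age ar X"
  using assms by (subst (asm) rk_ge.simps) blast

lemma rk_mono:
  fixes \<alpha> \<beta> :: "'o::wellorder"
  shows "rk_ge ar K X \<alpha> F \<Longrightarrow> \<beta> < \<alpha> \<Longrightarrow> rk_ge ar K X \<beta> F"
proof (induction \<beta> arbitrary: \<alpha> F rule: less_induct)
  case (less \<beta>)
  have Fage: "F \<in> age ar X" using less.prems(1) by (rule rk_age)
  show ?case
  proof (cases "\<exists>\<delta>. is_succ \<delta> \<beta>")
    case True
    then obtain \<delta> where d: "is_succ \<delta> \<beta>" by blast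
    show ?thesis
    proof (cases "\<exists>\<gamma>. is_succ \<gamma> \<alpha>")
      case True
      then obtain \<gamma> where g: "is_succ \<gamma> \<alpha>" by blast
      have bg: "\<beta> \<le> \<gamma>"
      proof (rule ccontr)
        assume "\<not> \<beta> \<le> \<gamma>"
        then have "\<gamma> < \<beta>" by simp
        then have "\<alpha> \<le> \<beta>" using g unfolding is_succ_def by blast
        then show False using less.prems(2) by simp
      qed
      have ga: "\<gamma> < \<alpha>" using g unfolding is_succ_def by blast
      have ext: "\<forall>B\<in>K. prime_ext ar F B \<longrightarrow> (\<exists>C. realization ar X F B C \<and> rk_ge ar K X \<gamma> C)"
        using less.prems(1) ga g by (subst (asm) rk_ge.simps) blast
      have db: "\<delta> < \<beta>" using d unfolding is_succ_def by blast
      have ext2: "\<forall>B\<in>K. prime_ext ar F B \<longrightarrow> (\<exists>C. realization ar X F B C \<and> rk_ge ar K X \<delta> C)"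
      proof (intro ballI impI)
        fix B assume "B \<in> K" "prime_ext ar F B"
        then obtain C where "realization ar X F B C" "rk_ge ar K X \<gamma> C" using ext by blast
        moreover have "rk_ge ar K X \<delta> C"
          using less.IH[OF db \<open>rk_ge ar K X \<gamma> C\<close>] db bg by (metis order_le_less order_less_le_trans)
        ultimately show "\<exists>C. realization ar X F B C \<and> rk_ge ar K X \<delta> C" by blast
      qed
      have du: "\<forall>\<gamma>'. is_succ \<gamma>' \<beta> \<longrightarrow> \<gamma>' = \<delta>" using succ_unique d by blast
      show ?thesis
        by (subst rk_ge.simps) (use Fage ext2 du d in blast)
    next
      case False
      then show ?thesis using less.prems by (subst (asm) rk_ge.simps) blast
    qed
  next
    case False
    have "\<forall>\<beta>'\<in>{..<\<beta>}. rk_ge ar K X \<beta>' F"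
      using less.IH less.prems by (meson lessThan_iff order_less_trans)
    then show ?thesis
      by (subst rk_ge.simps) (use Fage False in blast)
  qed
qed

lemma rk_exists:
  fixes \<delta> :: "'o::wellorder"
  assumes "F \<in> age ar X" "\<not> rk_ge ar K X \<delta> F"
  shows "\<exists>\<eta><\<delta>. rk_eq ar K X \<eta> F"
proof -
  let ?d = "LEAST d. \<not> rk_ge ar K X (d::'o) F"
  have nd: "\<not> rk_ge ar K X ?d F" using assms(2) by (rule LeastI)
  have dd: "?d \<le> \<delta>" using assms(2) by (rule Least_le)
  have below: "\<And>e. e < ?d \<Longrightarrow> rk_ge ar K X e F" using not_less_Least by blast
  show ?thesis
  proof (cases "\<exists>\<eta>. is_succ \<eta> ?d")
    case True
    then obtain \<eta> where e: "is_succ \<eta> ?d" by blast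
    have "\<eta> < ?d" using e unfolding is_succ_def by blast
    then have "rk_eq ar K X \<eta> F" unfolding rk_eq_def using below e nd by blast
    then show ?thesis using \<open>\<eta> < ?d\<close> dd by (meson less_le_trans)
  next
    case False
    have "rk_ge ar K X ?d F"
      by (subst rk_ge.simps) (use assms(1) False below in blast)
    then show ?thesis using nd by blast
  qed
qed

theorem proposition2p12:
  fixes ar :: "'r::countable \<Rightarrow> nat" and \<F> :: "'r struc set" and X F :: "'r struc"
    and \<alpha> \<beta> :: "'o::wellorder"
  assumes "good_class ar \<F>"
    and "X \<in> sigma_class ar \<F>"
    and "F \<in> age ar X"
    and "rk_eq ar \<F> X \<alpha> F"
    and "\<beta> < \<alpha>"
  shows "\<exists>E \<in> age ar X. rk_eq ar \<F> X \<beta> E"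
  using assms(4,5)
proof (induction \<alpha> arbitrary: F rule: less_induct)
  case (less \<alpha>)
  obtain \<gamma> where g: "is_succ \<alpha> \<gamma>" and ng: "\<not> rk_ge ar \<F> X \<gamma> F" and ra: "rk_ge ar \<F> X \<alpha> F"
    using less.prems(1) unfolding rk_eq_def by blast
  have Fage: "F \<in> age ar X" using ra by (rule rk_age)
  have ag: "\<alpha> < \<gamma>" using g unfolding is_succ_def by blast
  obtain B where B: "B \<in> \<F>" "prime_ext ar F B"
    and noC: "\<And>C. realization ar X F B C \<Longrightarrow> \<not> rk_ge ar \<F> X \<alpha> C"
  proof -
    have "\<not> (\<forall>\<gamma>'\<in>{..<\<gamma>}. is_succ \<gamma>' \<gamma> \<longrightarrow>
        (\<forall>B\<in>\<F>. prime_ext ar F B \<longrightarrow> (\<exists>C. realization ar X F B C \<and> rk_ge ar \<F> X \<gamma>' C)))"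
    proof
      assume h: "\<forall>\<gamma>'\<in>{..<\<gamma>}. is_succ \<gamma>' \<gamma> \<longrightarrow>
        (\<forall>B\<in>\<F>. prime_ext ar F B \<longrightarrow> (\<exists>C. realization ar X F B C \<and> rk_ge ar \<F> X \<gamma>' C))"
      have "rk_ge ar \<F> X \<gamma> F"
        by (subst rk_ge.simps) (use Fage h g in blast)
      then show False using ng by blast
    qed
    then obtain \<gamma>' where "\<gamma>' < \<gamma>" "is_succ \<gamma>' \<gamma>" and
      ex: "\<not> (\<forall>B\<in>\<F>. prime_ext ar F B \<longrightarrow> (\<exists>C. realization ar X F B C \<and> rk_ge ar \<F> X \<gamma>' C))"
      by blast
    then have "\<gamma>' = \<alpha>" using succ_unique g by blast
    then show ?thesis using ex that by blast
  qed
  obtain s where s: "is_succ \<beta> s" using succ_exists[OF less.prems(2)] by blast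
  have sa: "s \<le> \<alpha>" using s less.prems(2) unfolding is_succ_def by blast
  have rs: "rk_ge ar \<F> X s F"
    using ra sa rk_mono by (metis order_le_less)
  have bs: "\<beta> < s" using s unfolding is_succ_def by blast
  obtain C where C: "realization ar X F B C" "rk_ge ar \<F> X \<beta> C"
    using rs s bs B by (subst (asm) rk_ge.simps) blast
  have Cage: "C \<in> age ar X" using C(2) by (rule rk_age)
  have nC: "\<not> rk_ge ar \<F> X \<alpha> C" using noC C(1) .
  obtain \<eta> where e: "\<eta> < \<alpha>" "rk_eq ar \<F> X \<eta> C" using rk_exists[OF Cage nC] by blast
  have be: "\<beta> \<le> \<eta>"
  proof (rule ccontr)
    assume "\<not> \<beta> \<le> \<eta>"
    then have eb: "\<eta> < \<beta>" by simp
    obtain t where t: "is_succ \<eta> t" "\<not> rk_ge ar \<F> X t C" using e(2) unfolding rk_eq_def by blast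
    have "t \<le> \<beta>" using t(1) eb unfolding is_succ_def by blast
    then have "rk_ge ar \<F> X t C" using C(2) rk_mono by (metis order_le_less)
    then show False using t(2) by blast
  qed
  show ?case
  proof (cases "\<eta> = \<beta>")
    case True
    then show ?thesis using e Cage by blast
  next
    case False
    then have "\<beta> < \<eta>" using be by simp
    then show ?thesis using less.IH[OF e(1) e(2)] by blast
  qed
qed

end
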